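(* Let $V=W\times D$ be a direct product of finite-dimensional real vector spaces, let $\theta$ be the pullback to $V$ of a volume form in $W$ and $\zeta$ the pullback to $V$ of an indivisible exterior form in $D$. Then the divisibility space of the exterior $p$-form $\mu=\theta\wedge\zeta$ is $\{0\}\times D$.
   Context: A volume form in a vector space is a nonzero form of top degree (a nonzero scalar if the dimension is $0$). The divisibility space of an exterior form $\mu$ in $V$ is the common kernel of all $1$-forms $\xi\in V^*$ with $\xi\wedge\mu=0$ (for a nonzero $0$-form it is $V$). An exterior form in $D$ is indivisible if its divisibility space is all of $D$, i.e. $\xi\wedge\zeta\neq0$ for all nonzero $\xi\in D^*$. *)

theory Defs
  imports "HOL-Analysis.Analysis"
begin

text \<open>Exterior k-forms on a real vector space 'v, represented as functions on lists of
vectors: alternating multilinear in lists of length k, and 0 on lists of other length.\<close>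

definition alt_form :: "nat \<Rightarrow> ('v::real_vector list \<Rightarrow> real) \<Rightarrow> bool" where
  "alt_form k f \<longleftrightarrow>
     (\<forall>xs. length xs \<noteq> k \<longrightarrow> f xs = 0) \<and>
     (\<forall>xs i. length xs = k \<and> i < k \<longrightarrow> linear (\<lambda>v. f (xs[i := v]))) \<and>
     (\<forall>xs i j. length xs = k \<and> i < j \<and> j < k \<and> xs ! i = xs ! j \<longrightarrow> f xs = 0)"

definition wedge :: "nat \<Rightarrow> nat \<Rightarrow> ('v list \<Rightarrow> real) \<Rightarrow> ('v list \<Rightarrow> real) \<Rightarrow> ('v list \<Rightarrow> real)" where
  "wedge k l \<alpha> \<beta> = (\<lambda>xs. if length xs = k + l then
      (1 / (fact k * fact l)) *
      (\<Sum>\<sigma> \<in> {\<sigma>. \<sigma> permutes {0..<k+l}}.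
          of_int (sign \<sigma>) * \<alpha> (map (\<lambda>i. xs ! \<sigma> i) [0..<k])
                         * \<beta> (map (\<lambda>i. xs ! \<sigma> (k + i)) [0..<l]))
    else 0)"

definition one_form :: "('v \<Rightarrow> real) \<Rightarrow> ('v list \<Rightarrow> real)" where
  "one_form \<xi> = (\<lambda>xs. if length xs = 1 then \<xi> (hd xs) else 0)"

definition div_space :: "nat \<Rightarrow> ('v::real_vector list \<Rightarrow> real) \<Rightarrow> 'v set" where
  "div_space k \<mu> = {v. \<forall>\<xi>. linear \<xi> \<and> wedge 1 k (one_form \<xi>) \<mu> = (\<lambda>_. 0) \<longrightarrow> \<xi> v = 0}"

definition volume_form :: "nat \<Rightarrow> ('v::real_vector list \<Rightarrow> real) \<Rightarrow> bool" where
  "volume_form k f \<longleftrightarrow> k = dim (UNIV :: 'v set) \<and> alt_form k f \<and> f \<noteq> (\<lambda>_. 0)"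

definition indivisible :: "nat \<Rightarrow> ('v::real_vector list \<Rightarrow> real) \<Rightarrow> bool" where
  "indivisible k f \<longleftrightarrow> alt_form k f \<and> div_space k f = UNIV"

definition fin_dim_space :: "'v::real_vector itself \<Rightarrow> bool" where
  "fin_dim_space _ \<longleftrightarrow> (\<exists>B :: 'v set. finite B \<and> span B = UNIV)"

end

theory Submission
  imports Defs
begin

definition Pm :: "(nat \<Rightarrow> nat) \<Rightarrow> 'a list \<Rightarrow> 'a list" where
  "Pm \<sigma> xs = map (\<lambda>i. xs ! \<sigma> i) [0..<length xs]"

definition Alt :: "nat \<Rightarrow> ('a list \<Rightarrow> real) \<Rightarrow> 'a list \<Rightarrow> real" where
  "Alt N F xs = (\<Sum>\<sigma>\<in>{\<sigma>. \<sigma> permutes {0..<N}}. of_int (sign \<sigma>) * F (Pm \<sigma> xs))"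

definition shiftp :: "nat \<Rightarrow> (nat \<Rightarrow> nat) \<Rightarrow> nat \<Rightarrow> nat" where
  "shiftp a \<pi> i = (if i < a then i else a + \<pi> (i - a))"

lemma length_Pm [simp]: "length (Pm \<sigma> xs) = length xs"
  by (simp add: Pm_def)

lemma nth_Pm [simp]: "i < length xs \<Longrightarrow> Pm \<sigma> xs ! i = xs ! \<sigma> i"
  by (simp add: Pm_def)

lemma perm_lt: "\<sigma> permutes {0..<(N::nat)} \<Longrightarrow> i < N \<Longrightarrow> \<sigma> i < N"
  using permutes_in_image[of \<sigma> "{0..<N}" i] by simp

lemma Pm_comp: "(\<And>i. i < length xs \<Longrightarrow> \<rho> i < length xs) \<Longrightarrow> Pm (\<tau> \<circ> \<rho>) xs = Pm \<rho> (Pm \<tau> xs)"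
  by (rule nth_equalityI) auto

lemma Pm_id [simp]: "Pm id xs = xs"
  by (rule nth_equalityI) auto

lemma Pm_ident [simp]: "Pm (\<lambda>i. i) xs = xs"
  by (rule nth_equalityI) auto

lemma Pm_map: "(\<And>i. i < length xs \<Longrightarrow> \<sigma> i < length xs) \<Longrightarrow> Pm \<sigma> (map f xs) = map f (Pm \<sigma> xs)"
  by (rule nth_equalityI) auto

lemma Pm_take:
  assumes "\<sigma> permutes {0..<a}" "a \<le> length xs"
  shows "take a (Pm \<sigma> xs) = Pm \<sigma> (take a xs)"
  using assms by (intro nth_equalityI) (auto simp: perm_lt)

lemma Pm_drop:
  assumes "\<sigma> permutes {0..<a}" "a \<le> length xs"
  shows "drop a (Pm \<sigma> xs) = drop a xs"
proof (intro nth_equalityI)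
  fix i assume "i < length (drop a (Pm \<sigma> xs))"
  then have "\<sigma> (a + i) = a + i" using assms(1) by (auto simp: permutes_def)
  then show "drop a (Pm \<sigma> xs) ! i = drop a xs ! i"
    using \<open>i < _\<close> assms by auto
qed simp

lemma Pm_shift_take:
  assumes "length xs = a + b"
  shows "take a (Pm (shiftp a \<sigma>) xs) = take a xs"
proof (intro nth_equalityI)
  fix i assume "i < length (take a (Pm (shiftp a \<sigma>) xs))"
  then have "i < a" "i < length xs" by auto
  then show "take a (Pm (shiftp a \<sigma>) xs) ! i = take a xs ! i" by (simp add: shiftp_def)
qed simp

lemma Pm_shift_drop:
  assumes "\<sigma> permutes {0..<b}" "length xs = a + b"
  shows "drop a (Pm (shiftp a \<sigma>) xs) = Pm \<sigma> (drop a xs)"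
proof (intro nth_equalityI)
  fix i assume "i < length (drop a (Pm (shiftp a \<sigma>) xs))"
  then have i: "i < b" using assms by simp
  then have "\<sigma> i < b" using perm_lt[OF assms(1)] by blast
  then show "drop a (Pm (shiftp a \<sigma>) xs) ! i = Pm \<sigma> (drop a xs) ! i"
    using i assms(2) by (simp add: shiftp_def)
qed simp

lemma Pm_update:
  assumes "\<sigma> permutes {0..<N}" "length xs = N" "j < N"
  shows "Pm \<sigma> (xs[j := v]) = (Pm \<sigma> xs)[inv \<sigma> j := v]"
proof (intro nth_equalityI)
  fix k assume k: "k < length (Pm \<sigma> (xs[j := v]))"
  have "\<sigma> k = j \<longleftrightarrow> k = inv \<sigma> j"
    using permutes_inverses[OF assms(1)] by metis
  then show "Pm \<sigma> (xs[j := v]) ! k = (Pm \<sigma> xs)[inv \<sigma> j := v] ! k"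
    using k assms by (auto simp: nth_list_update perm_lt)
qed simp

lemma inv_lt: "\<sigma> permutes {0..<(N::nat)} \<Longrightarrow> j < N \<Longrightarrow> inv \<sigma> j < N"
  using perm_lt permutes_inv by blast

lemma shiftp_id: "shiftp a id = id"
  by (auto simp: shiftp_def)

lemma shiftp_swap: "shiftp a (Transposition.transpose x y \<circ> p) = Transposition.transpose (a+x) (a+y) \<circ> shiftp a p"
  by (rule ext) (auto simp: shiftp_def Transposition.transpose_def)

lemma shiftp_perm:
  assumes "\<sigma> permutes {0..<b}"
  shows "shiftp a \<sigma> permutes {a..<a+b} \<and> sign (shiftp a \<sigma>) = sign \<sigma>"
  using assms finite_atLeastLessThan
proof (induction rule: permutes_induct)
  case id
  have "shiftp a id = id" by (rule shiftp_id)
  then show ?case using permutes_id by metis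
next
  case (swap x y p)
  have t: "Transposition.transpose (a+x) (a+y) permutes {a..<a+b}"
    using swap by (intro permutes_swap_id) auto
  have "shiftp a (Transposition.transpose x y \<circ> p) permutes {a..<a+b}"
    unfolding shiftp_swap using swap t by (simp add: permutes_compose)
  moreover have "sign (shiftp a (Transposition.transpose x y \<circ> p)) = sign (Transposition.transpose x y \<circ> p)"
  proof -
    have "sign (Transposition.transpose (a+x) (a+y) \<circ> shiftp a p) = sign (Transposition.transpose (a+x) (a+y)) * sign (shiftp a p)"
      by (rule sign_compose[OF permutation_swap_id permutes_imp_permutation[OF _ conjunct1[OF swap(5)]]]) simp
    moreover have "sign (Transposition.transpose x y \<circ> p) = sign (Transposition.transpose x y) * sign p"
      by (rule sign_compose[OF permutation_swap_id permutes_imp_permutation[OF _ swap(4)]]) simp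
    ultimately show ?thesis unfolding shiftp_swap using swap by (simp add: sign_swap_id)
  qed
  ultimately show ?case by blast
qed

lemma perm_of_permutes: "\<sigma> permutes {0..<(N::nat)} \<Longrightarrow> permutation \<sigma>"
  by (rule permutes_imp_permutation[OF finite_atLeastLessThan])

lemma Alt_compose_right:
  assumes p: "\<pi> permutes {0..<N}" and l: "length xs = N"
  shows "Alt N (\<lambda>zs. F (Pm \<pi> zs)) xs = of_int (sign \<pi>) * Alt N F xs"
proof -
  have "Alt N F xs = (\<Sum>\<rho>\<in>{\<rho>. \<rho> permutes {0..<N}}. of_int (sign (\<rho> \<circ> \<pi>)) * F (Pm (\<rho> \<circ> \<pi>) xs))"
    unfolding Alt_def by (rule sum_permutations_compose_right[OF p])
  also have "\<dots> = (\<Sum>\<rho>\<in>{\<rho>. \<rho> permutes {0..<N}}. of_int (sign \<pi>) * (of_int (sign \<rho>) * F (Pm \<pi> (Pm \<rho> xs))))"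
  proof (intro sum.cong refl)
    fix \<rho> assume "\<rho> \<in> {\<rho>. \<rho> permutes {0..<N}}"
    then have r: "\<rho> permutes {0..<N}" by simp
    have "sign (\<rho> \<circ> \<pi>) = sign \<rho> * sign \<pi>"
      by (rule sign_compose[OF perm_of_permutes[OF r] perm_of_permutes[OF p]])
    moreover have "Pm (\<rho> \<circ> \<pi>) xs = Pm \<pi> (Pm \<rho> xs)"
      by (rule Pm_comp) (use p l perm_lt in auto)
    ultimately show "of_int (sign (\<rho> \<circ> \<pi>)) * F (Pm (\<rho> \<circ> \<pi>) xs) = of_int (sign \<pi>) * (of_int (sign \<rho>) * F (Pm \<pi> (Pm \<rho> xs)))"
      by simp
  qed
  also have "\<dots> = of_int (sign \<pi>) * Alt N (\<lambda>zs. F (Pm \<pi> zs)) xs"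
    unfolding Alt_def by (simp add: sum_distrib_left)
  finally have e: "Alt N F xs = of_int (sign \<pi>) * Alt N (\<lambda>zs. F (Pm \<pi> zs)) xs" .
  have ss: "of_int (sign \<pi>) * of_int (sign \<pi>) = (1::real)"
    by (metis of_int_mult sign_idempotent of_int_1)
  show ?thesis unfolding e by (simp add: mult.assoc[symmetric] ss)
qed

lemma Alt_rep:
  assumes l: "length xs = N" and ij: "i < j" "j < N" and eq: "xs ! i = xs ! j"
  shows "Alt N F xs = 0"
proof -
  let ?t = "Transposition.transpose i j"
  have t: "?t permutes {0..<N}" using ij by (intro permutes_swap_id) auto
  have tx: "Pm ?t xs = xs"
    using l eq by (intro nth_equalityI) (auto simp: Transposition.transpose_def)
  have "Alt N F xs = (\<Sum>\<rho>\<in>{\<rho>. \<rho> permutes {0..<N}}. of_int (sign (?t \<circ> \<rho>)) * F (Pm (?t \<circ> \<rho>) xs))"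
    unfolding Alt_def by (rule setum_permutations_compose_left[OF t])
  also have "\<dots> = (\<Sum>\<rho>\<in>{\<rho>. \<rho> permutes {0..<N}}. - (of_int (sign \<rho>) * F (Pm \<rho> xs)))"
  proof (intro sum.cong refl)
    fix \<rho> assume "\<rho> \<in> {\<rho>. \<rho> permutes {0..<N}}"
    then have r: "\<rho> permutes {0..<N}" by simp
    have "sign (?t \<circ> \<rho>) = sign ?t * sign \<rho>"
      by (rule sign_compose[OF perm_of_permutes[OF t] perm_of_permutes[OF r]])
    also have "\<dots> = - sign \<rho>" using ij by (simp add: sign_swap_id)
    finally have s: "sign (?t \<circ> \<rho>) = - sign \<rho>" .
    have "Pm (?t \<circ> \<rho>) xs = Pm \<rho> (Pm ?t xs)"
      by (rule Pm_comp) (use r l perm_lt in auto)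
    then show "of_int (sign (?t \<circ> \<rho>)) * F (Pm (?t \<circ> \<rho>) xs) = - (of_int (sign \<rho>) * F (Pm \<rho> xs))"
      by (simp add: s tx)
  qed
  also have "\<dots> = - Alt N F xs" unfolding Alt_def by (simp add: sum_negf)
  finally show ?thesis by simp
qed

lemma linear_mult_left: "linear g \<Longrightarrow> linear (\<lambda>v. (c::real) * g v)"
  unfolding linear_iff by (auto simp: algebra_simps)

lemma Alt_lin:
  assumes lin: "\<And>ys j. length ys = N \<Longrightarrow> j < N \<Longrightarrow> linear (\<lambda>v. F (ys[j := v]))"
    and l: "length xs = N" and j: "j < N"
  shows "linear (\<lambda>v. Alt N F (xs[j := v]))"
  unfolding Alt_def
proof (intro linear_compose_sum ballI)
  fix \<rho> assume "\<rho> \<in> {\<rho>. \<rho> permutes {0..<N}}"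
  then have r: "\<rho> permutes {0..<N}" by simp
  have "linear (\<lambda>v. F ((Pm \<rho> xs)[inv \<rho> j := v]))"
    using lin[of "Pm \<rho> xs" "inv \<rho> j"] l j inv_lt[OF r] by simp
  then show "linear (\<lambda>v. of_int (sign \<rho>) * F (Pm \<rho> (xs[j := v])))"
    using Pm_update[OF r l j] by (simp add: linear_mult_left)
qed

lemma alt_lin: "alt_form k f \<Longrightarrow> length xs = k \<Longrightarrow> i < k \<Longrightarrow> linear (\<lambda>v. f (xs[i := v]))"
  unfolding alt_form_def by blast

lemma alt_rep: "alt_form k f \<Longrightarrow> length xs = k \<Longrightarrow> i < k \<Longrightarrow> j < k \<Longrightarrow> i \<noteq> j \<Longrightarrow> xs ! i = xs ! j \<Longrightarrow> f xs = 0"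
  unfolding alt_form_def by (metis linorder_neqE_nat)

lemma alt_zero: "alt_form k f \<Longrightarrow> length xs = k \<Longrightarrow> i < k \<Longrightarrow> xs ! i = 0 \<Longrightarrow> f xs = 0"
  using linear_0[OF alt_lin[of k f xs i]] by (metis list_update_id)

lemma alt_swap:
  assumes f: "alt_form k f" and l: "length xs = k" and ab: "a < k" "b < k" "a \<noteq> b"
  shows "f (Pm (Transposition.transpose a b) xs) = - f xs"
proof -
  define g where "g x y = f (xs[a := x, b := y])" for x y
  have lb: "linear (\<lambda>y. g x y)" for x
    unfolding g_def using alt_lin[OF f, of "xs[a := x]" b] l ab by simp
  have la: "linear (\<lambda>x. g x y)" for y
    unfolding g_def using alt_lin[OF f, of "xs[b := y]" a] l ab by (simp add: list_update_swap)
  have z: "g x x = 0" for x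
    unfolding g_def using alt_rep[OF f, of "xs[a := x, b := x]" a b] l ab by (simp add: nth_list_update)
  have anti: "g x y = - g y x" for x y
  proof -
    have "0 = g (x+y) (x+y)" using z by simp
    also have "\<dots> = g x (x+y) + g y (x+y)" using linear_add[OF la] by simp
    also have "\<dots> = g x x + g x y + (g y x + g y y)" using linear_add[OF lb] by simp
    finally show ?thesis using z by simp
  qed
  have p: "Pm (Transposition.transpose a b) xs = xs[a := xs ! b, b := xs ! a]"
    using l ab by (intro nth_equalityI) (auto simp: nth_list_update Transposition.transpose_def)
  have q: "xs = xs[a := xs ! a, b := xs ! b]" by simp
  have "f (Pm (Transposition.transpose a b) xs) = g (xs ! b) (xs ! a)" unfolding p g_def ..
  also have "\<dots> = - g (xs ! a) (xs ! b)" by (rule anti)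
  also have "g (xs ! a) (xs ! b) = f xs" unfolding g_def using q by simp
  finally show ?thesis .
qed

lemma alt_perm:
  assumes f: "alt_form k f" and s: "\<sigma> permutes {0..<k}"
  shows "length xs = k \<Longrightarrow> f (Pm \<sigma> xs) = of_int (sign \<sigma>) * f xs"
  using s finite_atLeastLessThan
proof (induction arbitrary: xs rule: permutes_induct)
  case id
  then show ?case by (simp add: sign_id)
next
  case (swap a b p)
  let ?t = "Transposition.transpose a b"
  have pp: "p permutes {0..<k}" by fact
  have "Pm (?t \<circ> p) xs = Pm p (Pm ?t xs)"
    by (rule Pm_comp) (use pp swap perm_lt in auto)
  then have "f (Pm (?t \<circ> p) xs) = of_int (sign p) * f (Pm ?t xs)"
    using swap by simp
  also have "\<dots> = - (of_int (sign p) * f xs)"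
    using alt_swap[OF f swap(6)] swap by simp
  also have "sign (?t \<circ> p) = sign ?t * sign p"
    by (rule sign_compose[OF permutation_swap_id perm_of_permutes[OF pp]])
  then have "sign (?t \<circ> p) = - sign p" using swap by (simp add: sign_swap_id)
  ultimately have "f (Pm (?t \<circ> p) xs) = of_int (sign (?t \<circ> p)) * f xs" by simp
  then show ?case by (simp add: o_def)
qed

lemma wedge_Alt:
  assumes "length xs = k + l"
  shows "wedge k l a b xs = 1 / (fact k * fact l) * Alt (k + l) (\<lambda>zs. a (take k zs) * b (drop k zs)) xs"
proof -
  have e1: "map (\<lambda>i. xs ! \<sigma> i) [0..<k] = take k (Pm \<sigma> xs)" for \<sigma>
    using assms by (intro nth_equalityI) auto
  have e2: "map (\<lambda>i. xs ! \<sigma> (k + i)) [0..<l] = drop k (Pm \<sigma> xs)" for \<sigma>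
    using assms by (intro nth_equalityI) auto
  show ?thesis
    unfolding wedge_def Alt_def using assms
    by (simp add: e1 e2 sum_distrib_left mult.assoc)
qed

lemma shiftp1_perm:
  assumes "\<sigma> permutes {0..<m}"
  shows "shiftp 1 \<sigma> permutes {0..<Suc m}" "sign (shiftp 1 \<sigma>) = sign \<sigma>"
proof -
  have "shiftp 1 \<sigma> permutes {1..<1+m}" using shiftp_perm[OF assms] by blast
  then show "shiftp 1 \<sigma> permutes {0..<Suc m}" by (rule permutes_subset) auto
  show "sign (shiftp 1 \<sigma>) = sign \<sigma>" using shiftp_perm[OF assms] by blast
qed

lemma W1:
  assumes l: "length ys = Suc (k + l)"
  shows "wedge 1 (k + l) (one_form \<xi>) (wedge k l a b) ys
    = 1 / (fact k * fact l) * Alt (Suc (k + l)) (\<lambda>zs. \<xi> (hd zs) * (a (take k (tl zs)) * b (drop k (tl zs)))) ys"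
proof -
  define m where "m = k + l"
  define c :: real where "c = 1 / (fact k * fact l)"
  define G where "G zs = \<xi> (hd zs) * (a (take k (tl zs)) * b (drop k (tl zs)))" for zs
  define S where "S = {\<sigma>. \<sigma> permutes {0..<m}}"
  have inner: "one_form \<xi> (take 1 zs) * wedge k l a b (drop 1 zs)
      = c * (\<Sum>\<sigma>\<in>S. of_int (sign \<sigma>) * G (Pm (shiftp 1 \<sigma>) zs))"
    if lz: "length zs = Suc m" for zs
  proof -
    have o: "one_form \<xi> (take 1 zs) = \<xi> (hd zs)"
      using lz by (cases zs) (auto simp: one_form_def)
    have w: "wedge k l a b (drop 1 zs) = c * (\<Sum>\<sigma>\<in>S. of_int (sign \<sigma>) * (a (take k (Pm \<sigma> (tl zs))) * b (drop k (Pm \<sigma> (tl zs)))))"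
      using lz unfolding c_def S_def m_def by (simp add: wedge_Alt Alt_def drop_Suc)
    have g: "G (Pm (shiftp 1 \<sigma>) zs) = \<xi> (hd zs) * (a (take k (Pm \<sigma> (tl zs))) * b (drop k (Pm \<sigma> (tl zs))))"
      if s: "\<sigma> \<in> S" for \<sigma>
    proof -
      have s': "\<sigma> permutes {0..<m}" using s by (simp add: S_def)
      have "drop 1 (Pm (shiftp 1 \<sigma>) zs) = Pm \<sigma> (drop 1 zs)"
        by (rule Pm_shift_drop[OF s']) (simp add: lz)
      then have t: "tl (Pm (shiftp 1 \<sigma>) zs) = Pm \<sigma> (tl zs)" by (simp add: drop_Suc)
      have "take 1 (Pm (shiftp 1 \<sigma>) zs) = take 1 zs"
        by (rule Pm_shift_take) (simp add: lz)
      then have h: "hd (Pm (shiftp 1 \<sigma>) zs) = hd zs"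
        using lz by (cases zs; cases "Pm (shiftp 1 \<sigma>) zs") auto
      show ?thesis unfolding G_def t h ..
    qed
    show ?thesis unfolding o w using g
      by (simp add: sum_distrib_left mult.assoc mult.left_commute cong: sum.cong)
  qed
  have "wedge 1 m (one_form \<xi>) (wedge k l a b) ys
      = 1 / fact m * Alt (Suc m) (\<lambda>zs. one_form \<xi> (take 1 zs) * wedge k l a b (drop 1 zs)) ys"
    using l wedge_Alt[of ys 1 m] unfolding m_def by simp
  also have "Alt (Suc m) (\<lambda>zs. one_form \<xi> (take 1 zs) * wedge k l a b (drop 1 zs)) ys
      = (\<Sum>\<tau>\<in>{\<tau>. \<tau> permutes {0..<Suc m}}. of_int (sign \<tau>) * (c * (\<Sum>\<sigma>\<in>S. of_int (sign \<sigma>) * G (Pm (shiftp 1 \<sigma>) (Pm \<tau> ys)))))"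
    unfolding Alt_def using l inner unfolding m_def by (intro sum.cong refl) simp
  also have "\<dots> = c * (\<Sum>\<sigma>\<in>S. of_int (sign \<sigma>) * Alt (Suc m) (\<lambda>zs. G (Pm (shiftp 1 \<sigma>) zs)) ys)"
    unfolding Alt_def sum_distrib_left
    by (subst sum.swap) (simp add: mult.assoc mult.left_commute)
  also have "\<dots> = c * (\<Sum>\<sigma>\<in>S. Alt (Suc m) G ys)"
  proof -
    have "of_int (sign \<sigma>) * Alt (Suc m) (\<lambda>zs. G (Pm (shiftp 1 \<sigma>) zs)) ys = Alt (Suc m) G ys"
      if "\<sigma> \<in> S" for \<sigma>
    proof -
      have s': "\<sigma> permutes {0..<m}" using that by (simp add: S_def)
      have "Alt (Suc m) (\<lambda>zs. G (Pm (shiftp 1 \<sigma>) zs)) ys = of_int (sign \<sigma>) * Alt (Suc m) G ys"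
        using Alt_compose_right[OF shiftp1_perm(1)[OF s'], of ys G] shiftp1_perm(2)[OF s'] l
        unfolding m_def by simp
      moreover have "of_int (sign \<sigma>) * of_int (sign \<sigma>) = (1::real)"
        by (metis of_int_mult sign_idempotent of_int_1)
      ultimately show ?thesis by (simp add: mult.assoc[symmetric])
    qed
    then show ?thesis by (simp cong: sum.cong)
  qed
  also have "\<dots> = c * fact m * Alt (Suc m) G ys"
    unfolding S_def by (simp add: card_permutations)
  finally show ?thesis unfolding m_def c_def G_def by simp
qed

lemma alt_dep_zero:
  fixes f :: "'w::real_vector list \<Rightarrow> real"
  assumes fin: "fin_dim_space TYPE('w)" and N: "dim (UNIV::'w set) < N"
    and rep: "\<And>xs i j. length xs = N \<Longrightarrow> i < j \<Longrightarrow> j < N \<Longrightarrow> xs ! i = xs ! j \<Longrightarrow> f xs = 0"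
    and lin: "\<And>xs j. length xs = N \<Longrightarrow> j < N \<Longrightarrow> linear (\<lambda>v. f (xs[j := v]))"
    and l: "length xs = N"
  shows "f xs = 0"
proof (cases "distinct xs")
  case False
  then obtain i j where ij: "i < length xs" "j < length xs" "i \<noteq> j" "xs ! i = xs ! j"
    by (auto simp: distinct_conv_nth)
  show ?thesis
  proof (cases "i < j")
    case True then show ?thesis using rep[of xs i j] ij l by simp
  next
    case False then have "j < i" using ij by simp
    then show ?thesis using rep[of xs j i] ij l by simp
  qed
next
  case True
  have card: "card (set xs) = N" using distinct_card[OF True] l by simp
  obtain F :: "'w set" where F: "finite F" "span F = UNIV" using fin unfolding fin_dim_space_def by blast
  obtain B :: "'w set" where B: "B \<subseteq> UNIV" "independent B" "UNIV \<subseteq> span B" "card B = dim (UNIV :: 'w set)"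
    using real_vector.basis_exists by blast
  have fB: "finite B" using real_vector.independent_span_bound[OF F(1) B(2)] F(2) by auto
  have "dependent (set xs)"
  proof (rule ccontr)
    assume "\<not> dependent (set xs)"
    then have "card (set xs) \<le> card B"
      using real_vector.independent_span_bound[OF fB] B(3) by blast
    then show False using card B(4) N by simp
  qed
  then obtain a where a: "a \<in> set xs" "a \<in> span (set xs - {a})"
    unfolding real_vector.dependent_def by blast
  obtain j where j: "j < N" "xs ! j = a" using a(1) l by (auto simp: in_set_conv_nth)
  let ?T = "set xs - {a}"
  obtain u where u: "a = (\<Sum>v\<in>?T. u v *\<^sub>R v)"
    using a(2) real_vector.span_finite[of ?T] by auto
  have h: "linear (\<lambda>v. f (xs[j := v]))" using lin[OF l j(1)] .
  have "f xs = f (xs[j := (\<Sum>v\<in>?T. u v *\<^sub>R v)])"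
    using j u by (metis list_update_id)
  also have "\<dots> = (\<Sum>v\<in>?T. u v * f (xs[j := v]))"
    using linear_sum[OF h, of "\<lambda>v. u v *\<^sub>R v" ?T] linear_scale[OF h] by simp
  also have "\<dots> = 0"
  proof (intro sum.neutral ballI)
    fix v assume v: "v \<in> ?T"
    then obtain i where i: "i < N" "xs ! i = v" using l by (auto simp: in_set_conv_nth)
    have "i \<noteq> j" using i j v by auto
    have z: "f (xs[j := v]) = 0"
    proof (cases "i < j")
      case True then show ?thesis using rep[of "xs[j := v]" i j] i j l \<open>i \<noteq> j\<close> by simp
    next
      case False then have "j < i" using \<open>i \<noteq> j\<close> by simp
      then show ?thesis using rep[of "xs[j := v]" j i] i j l by simp
    qed
    show "u v * f (xs[j := v]) = 0" by (simp add: z)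
  qed
  finally show ?thesis .
qed

lemma Alt_block_zero:
  assumes l: "length ys = N" and aN: "a \<le> N"
    and K0: "\<And>us. length us = a \<Longrightarrow> Alt a K us = 0"
  shows "Alt N (\<lambda>zs. K (take a zs) * Z (drop a zs)) ys = 0"
proof -
  define H where "H zs = K (take a zs) * Z (drop a zs)" for zs
  define Sa where "Sa = {\<pi>. \<pi> permutes {0..<a}}"
  define SN where "SN = {\<pi>. \<pi> permutes {0..<N}}"
  have pe: "of_int (sign \<pi>) * Alt N (\<lambda>zs. H (Pm \<pi> zs)) ys = Alt N H ys" if "\<pi> \<in> Sa" for \<pi>
  proof -
    have p: "\<pi> permutes {0..<a}" using that by (simp add: Sa_def)
    have p': "\<pi> permutes {0..<N}" by (rule permutes_subset[OF p]) (use aN in auto)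
    have ss: "of_int (sign \<pi>) * of_int (sign \<pi>) = (1::real)"
      by (metis of_int_mult sign_idempotent of_int_1)
    show ?thesis using Alt_compose_right[OF p' l, of H] ss by (simp add: mult.assoc[symmetric])
  qed
  have "of_nat (card Sa) * Alt N H ys = (\<Sum>\<pi>\<in>Sa. of_int (sign \<pi>) * Alt N (\<lambda>zs. H (Pm \<pi> zs)) ys)"
    using pe by simp
  also have "\<dots> = (\<Sum>\<rho>\<in>SN. of_int (sign \<rho>) * (\<Sum>\<pi>\<in>Sa. of_int (sign \<pi>) * H (Pm \<pi> (Pm \<rho> ys))))"
    unfolding Alt_def SN_def sum_distrib_left
    by (subst sum.swap) (simp add: mult.assoc mult.left_commute)
  also have "\<dots> = 0"
  proof (intro sum.neutral ballI)
    fix \<rho> assume "\<rho> \<in> SN"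
    define zs where "zs = Pm \<rho> ys"
    have lz: "length zs = N" using l by (simp add: zs_def)
    have "(\<Sum>\<pi>\<in>Sa. of_int (sign \<pi>) * H (Pm \<pi> zs)) = (\<Sum>\<pi>\<in>Sa. of_int (sign \<pi>) * K (Pm \<pi> (take a zs))) * Z (drop a zs)"
      unfolding sum_distrib_right
    proof (intro sum.cong refl)
      fix \<pi> assume "\<pi> \<in> Sa"
      then have p: "\<pi> permutes {0..<a}" by (simp add: Sa_def)
      show "of_int (sign \<pi>) * H (Pm \<pi> zs) = of_int (sign \<pi>) * K (Pm \<pi> (take a zs)) * Z (drop a zs)"
        unfolding H_def using Pm_take[OF p, of zs] Pm_drop[OF p, of zs] lz aN by simp
    qed
    also have "\<dots> = 0" using K0[of "take a zs"] lz aN unfolding Alt_def Sa_def by simp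
    finally show "of_int (sign \<rho>) * (\<Sum>\<pi>\<in>Sa. of_int (sign \<pi>) * H (Pm \<pi> (Pm \<rho> ys))) = 0"
      by (simp add: zs_def)
  qed
  finally have "of_nat (card Sa) * Alt N H ys = 0" .
  moreover have "card Sa \<noteq> 0" unfolding Sa_def by (simp add: card_permutations)
  ultimately show ?thesis unfolding H_def by simp
qed

lemma K1_lin:
  assumes alt: "alt_form n \<theta>0" and lin: "linear \<alpha>"
    and l: "length ws = Suc n" and j: "j < Suc n"
  shows "linear (\<lambda>v. \<alpha> (hd (ws[j := v])) * \<theta>0 (tl (ws[j := v])))"
proof -
  obtain w ws' where ws: "ws = w # ws'" using l by (cases ws) auto
  have l': "length ws' = n" using l ws by simp
  show ?thesis
  proof (cases j)
    case 0
    have "linear (\<lambda>v. \<theta>0 ws' * \<alpha> v)" by (rule linear_mult_left[OF lin])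
    then show ?thesis using ws 0 by (simp add: mult.commute)
  next
    case (Suc j')
    have "linear (\<lambda>v. \<alpha> w * \<theta>0 (ws'[j' := v]))"
      by (rule linear_mult_left[OF alt_lin[OF alt l']]) (use j Suc in simp)
    then show ?thesis using ws Suc by simp
  qed
qed

lemma part1:
  fixes \<theta>0 :: "'w::real_vector list \<Rightarrow> real" and \<zeta>0 :: "'d::real_vector list \<Rightarrow> real"
    and \<alpha> :: "'w \<Rightarrow> real"
  assumes fin: "fin_dim_space TYPE('w)" and vol: "volume_form n \<theta>0" and lin: "linear \<alpha>"
  shows "wedge 1 (n + q) (one_form (\<lambda>p::'w\<times>'d. \<alpha> (fst p)))
           (wedge n q (\<lambda>xs. \<theta>0 (map fst xs)) (\<lambda>xs. \<zeta>0 (map snd xs))) = (\<lambda>_. 0)"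
proof (rule ext)
  fix ys :: "('w \<times> 'd) list"
  have alt: "alt_form n \<theta>0" and dn: "n = dim (UNIV :: 'w set)"
    using vol by (auto simp: volume_form_def)
  show "wedge 1 (n + q) (one_form (\<lambda>p::'w\<times>'d. \<alpha> (fst p)))
           (wedge n q (\<lambda>xs. \<theta>0 (map fst xs)) (\<lambda>xs. \<zeta>0 (map snd xs))) ys = 0"
  proof (cases "length ys = Suc (n + q)")
    case False
    then show ?thesis by (simp add: wedge_def)
  next
    case True
    define K0 where "K0 us = \<alpha> (fst (hd us)) * \<theta>0 (map fst (tl us))" for us :: "('w \<times> 'd) list"
    define K1 where "K1 ws = \<alpha> (hd ws) * \<theta>0 (tl ws)" for ws :: "'w list"
    define Z where "Z us = \<zeta>0 (map snd us)" for us :: "('w \<times> 'd) list"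
    have Geq: "(\<lambda>zs. \<alpha> (fst (hd zs)) * (\<theta>0 (map fst (take n (tl zs))) * \<zeta>0 (map snd (drop n (tl zs)))))
        = (\<lambda>zs. K0 (take (Suc n) zs) * Z (drop (Suc n) zs))"
    proof (rule ext)
      fix zs :: "('w \<times> 'd) list"
      show "\<alpha> (fst (hd zs)) * (\<theta>0 (map fst (take n (tl zs))) * \<zeta>0 (map snd (drop n (tl zs))))
          = K0 (take (Suc n) zs) * Z (drop (Suc n) zs)"
        unfolding K0_def Z_def by (cases zs) (simp_all add: take_tl drop_Suc)
    qed
    have K0z: "Alt (Suc n) K0 us = 0" if lu: "length us = Suc n" for us
    proof -
      have "Alt (Suc n) K0 us = Alt (Suc n) K1 (map fst us)"
        unfolding Alt_def
      proof (intro sum.cong refl)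
        fix \<pi> assume "\<pi> \<in> {\<pi>. \<pi> permutes {0..<Suc n}}"
        then have p: "\<pi> permutes {0..<Suc n}" by simp
        have pm: "Pm \<pi> (map fst us) = map fst (Pm \<pi> us)"
          by (rule Pm_map) (use p lu perm_lt in auto)
        have "K0 (Pm \<pi> us) = K1 (map fst (Pm \<pi> us))"
          using lu length_Pm[of \<pi> us] unfolding K0_def K1_def by (cases "Pm \<pi> us") (auto simp: map_tl)
        then show "of_int (sign \<pi>) * K0 (Pm \<pi> us) = of_int (sign \<pi>) * K1 (Pm \<pi> (map fst us))"
          by (simp add: pm)
      qed
      also have "\<dots> = 0"
      proof (rule alt_dep_zero[OF fin])
        show "dim (UNIV :: 'w set) < Suc n" using dn by simp
        show "\<And>xs i j. length xs = Suc n \<Longrightarrow> i < j \<Longrightarrow> j < Suc n \<Longrightarrow> xs ! i = xs ! j \<Longrightarrow> Alt (Suc n) K1 xs = 0"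
          by (rule Alt_rep)
        show "\<And>xs j. length xs = Suc n \<Longrightarrow> j < Suc n \<Longrightarrow> linear (\<lambda>v. Alt (Suc n) K1 (xs[j := v]))"
          by (rule Alt_lin) (unfold K1_def, rule K1_lin[OF alt lin])
        show "length (map fst us) = Suc n" using lu by simp
      qed
      finally show ?thesis .
    qed
    show ?thesis
      unfolding W1[OF True] Geq
      by (simp add: Alt_block_zero[OF True _ K0z])
  qed
qed

lemma permutes_natI:
  assumes "\<And>x. x < N \<Longrightarrow> f x < N" "inj_on f {0..<(N::nat)}" "\<And>x. x \<ge> N \<Longrightarrow> f x = x"
  shows "f permutes {0..<N}"
proof (rule bij_imp_permutes)
  have "f ` {0..<N} \<subseteq> {0..<N}" using assms(1) by auto
  then have "f ` {0..<N} = {0..<N}" using endo_inj_surj[OF finite_atLeastLessThan _ assms(2)] by blast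
  then show "bij_betw f {0..<N} {0..<N}" using assms(2) by (simp add: bij_betw_def)
  show "\<And>x. x \<notin> {0..<N} \<Longrightarrow> f x = x" using assms(3) by auto
qed

definition blk :: "nat \<Rightarrow> (nat \<Rightarrow> nat) \<times> (nat \<Rightarrow> nat) \<Rightarrow> nat \<Rightarrow> nat" where
  "blk a p = fst p \<circ> shiftp a (snd p)"

lemma blk_perm:
  assumes p1: "p1 permutes {0..<a}" and p2: "p2 permutes {0..<b}"
  shows "blk a (p1, p2) permutes {0..<a+b}" "sign (blk a (p1, p2)) = sign p1 * sign p2"
proof -
  have s: "shiftp a p2 permutes {a..<a+b}" "sign (shiftp a p2) = sign p2"
    using shiftp_perm[OF p2] by auto
  have s': "shiftp a p2 permutes {0..<a+b}" by (rule permutes_subset[OF s(1)]) auto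
  have p1': "p1 permutes {0..<a+b}" by (rule permutes_subset[OF p1]) auto
  show "blk a (p1, p2) permutes {0..<a+b}" unfolding blk_def
    using permutes_compose[OF s' p1'] by simp
  show "sign (blk a (p1, p2)) = sign p1 * sign p2" unfolding blk_def
    using sign_compose[OF perm_of_permutes[OF p1'] perm_of_permutes[OF s']] s(2) by simp
qed

lemma blk_inj:
  "inj_on (blk a) ({p. p permutes {0..<a}} \<times> {p. p permutes {0..<b}})"
proof (rule inj_onI)
  fix x y assume x: "x \<in> {p. p permutes {0..<a}} \<times> {p. p permutes {0..<b}}"
    and y: "y \<in> {p. p permutes {0..<a}} \<times> {p. p permutes {0..<b}}"
    and e: "blk a x = blk a y"
  obtain p1 p2 where xp: "x = (p1, p2)" by (cases x)
  obtain q1 q2 where yq: "y = (q1, q2)" by (cases y)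
  have p1: "p1 permutes {0..<a}" and p2: "p2 permutes {0..<b}" using x xp by auto
  have q1: "q1 permutes {0..<a}" and q2: "q2 permutes {0..<b}" using y yq by auto
  have e': "p1 (shiftp a p2 i) = q1 (shiftp a q2 i)" for i
    using e xp yq unfolding blk_def by (metis comp_apply fst_conv snd_conv)
  have "p1 = q1"
  proof (rule ext)
    fix i show "p1 i = q1 i"
    proof (cases "i < a")
      case True then show ?thesis using e'[of i] by (simp add: shiftp_def)
    next
      case False then show ?thesis using p1 q1 by (simp add: permutes_def)
    qed
  qed
  moreover have "p2 = q2"
  proof (rule ext)
    fix i show "p2 i = q2 i"
    proof (cases "i < b")
      case True
      have "p2 i < b" "q2 i < b" using True perm_lt p2 q2 by auto
      then have "p1 (a + p2 i) = a + p2 i" "q1 (a + q2 i) = a + q2 i"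
        using p1 q1 by (auto simp: permutes_def)
      then show ?thesis using e'[of "a + i"] by (simp add: shiftp_def)
    next
      case False then show ?thesis using p2 q2 by (simp add: permutes_def)
    qed
  qed
  ultimately show "x = y" using xp yq by simp
qed

lemma blk_surj:
  assumes r: "\<rho> permutes {0..<a+b}" and hi: "\<And>i. a \<le> i \<Longrightarrow> i < a + b \<Longrightarrow> a \<le> \<rho> i"
  shows "\<rho> \<in> blk a ` ({p. p permutes {0..<a}} \<times> {p. p permutes {0..<b}})"
proof -
  have inj: "inj_on \<rho> {0..<a+b}" using r permutes_inj_on by blast
  have img: "\<rho> ` {a..<a+b} = {a..<a+b}"
  proof (rule endo_inj_surj)
    show "\<rho> ` {a..<a+b} \<subseteq> {a..<a+b}" using hi perm_lt[OF r] by auto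
    show "inj_on \<rho> {a..<a+b}" using inj by (rule inj_on_subset) auto
  qed simp
  have lo: "\<rho> i < a" if "i < a" for i
  proof (rule ccontr)
    assume "\<not> \<rho> i < a"
    moreover have "\<rho> i < a + b" using perm_lt[OF r] that by simp
    ultimately have "\<rho> i \<in> \<rho> ` {a..<a+b}" using img by auto
    then obtain j where j: "j \<in> {a..<a+b}" "\<rho> i = \<rho> j" by auto
    moreover have "i \<in> {0..<a+b}" "j \<in> {0..<a+b}" using that j(1) by auto
    ultimately have "i = j" using inj_onD[OF inj] by blast
    then show False using j that by simp
  qed
  define p1 where "p1 i = (if i < a then \<rho> i else i)" for i
  define p2 where "p2 i = (if i < b then \<rho> (a + i) - a else i)" for i
  have p1: "p1 permutes {0..<a}"
  proof (rule permutes_natI)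
    show "\<And>x. x < a \<Longrightarrow> p1 x < a" using lo by (simp add: p1_def)
    show "inj_on p1 {0..<a}"
    proof (rule inj_onI)
      fix x y assume xy: "x \<in> {0..<a}" "y \<in> {0..<a}" "p1 x = p1 y"
      then have "\<rho> x = \<rho> y" "x \<in> {0..<a+b}" "y \<in> {0..<a+b}" by (auto simp: p1_def)
      then show "x = y" using inj_onD[OF inj] by blast
    qed
    show "\<And>x. a \<le> x \<Longrightarrow> p1 x = x" by (simp add: p1_def)
  qed
  have p2: "p2 permutes {0..<b}"
  proof (rule permutes_natI)
    show "p2 x < b" if "x < b" for x
    proof -
      have "\<rho> (a + x) < a + b" using perm_lt[OF r] that by simp
      then show ?thesis using that by (simp add: p2_def)
    qed
    show "inj_on p2 {0..<b}"
    proof (rule inj_onI)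
      fix x y assume xy: "x \<in> {0..<b}" "y \<in> {0..<b}" "p2 x = p2 y"
      have h: "a \<le> \<rho> (a + x)" "a \<le> \<rho> (a + y)" using hi xy by auto
      have "\<rho> (a + x) - a = \<rho> (a + y) - a" using xy by (simp add: p2_def)
      then have "\<rho> (a + x) = \<rho> (a + y)" using h by simp
      moreover have "a + x \<in> {0..<a+b}" "a + y \<in> {0..<a+b}" using xy by auto
      ultimately have "a + x = a + y" using inj_onD[OF inj] by blast
      then show "x = y" by simp
    qed
    show "\<And>x. b \<le> x \<Longrightarrow> p2 x = x" by (simp add: p2_def)
  qed
  have "\<rho> = blk a (p1, p2)"
  proof (rule ext)
    fix x
    show "\<rho> x = blk a (p1, p2) x"
    proof (cases "x < a")
      case True then show ?thesis by (simp add: blk_def shiftp_def p1_def)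
    next
      case False
      show ?thesis
      proof (cases "x < a + b")
        case True
        then have "a \<le> \<rho> x" using hi False by simp
        moreover have "x - a < b" using False True by simp
        ultimately show ?thesis using False True by (simp add: blk_def shiftp_def p1_def p2_def)
      next
        case False': False
        then have "\<rho> x = x" using r by (simp add: permutes_def)
        then show ?thesis using False False' by (simp add: blk_def shiftp_def p1_def p2_def)
      qed
    qed
  qed
  then show ?thesis using p1 p2 by blast
qed

lemma Alt_block_eval:
  assumes lu: "length us = a" and lv: "length vs = b"
    and van: "\<And>\<rho> i. \<rho> permutes {0..<a+b} \<Longrightarrow> a \<le> i \<Longrightarrow> i < a + b \<Longrightarrow> \<rho> i < a
               \<Longrightarrow> A (drop a (Pm \<rho> (us @ vs))) = 0"
    and altA: "\<And>\<pi>. \<pi> permutes {0..<b} \<Longrightarrow> A (Pm \<pi> vs) = of_int (sign \<pi>) * A vs"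
  shows "Alt (a + b) (\<lambda>zs. E (take a zs) * A (drop a zs)) (us @ vs) = fact b * A vs * Alt a E us"
proof -
  define ys where "ys = us @ vs"
  have ly: "length ys = a + b" using lu lv by (simp add: ys_def)
  define f where "f \<rho> = of_int (sign \<rho>) * (E (take a (Pm \<rho> ys)) * A (drop a (Pm \<rho> ys)))" for \<rho>
  define SN where "SN = {\<rho>. \<rho> permutes {0..<a+b}}"
  define Sa where "Sa = {\<rho>. \<rho> permutes {0..<a}}"
  define Sb where "Sb = {\<rho>. \<rho> permutes {0..<b}}"
  define T where "T = blk a ` (Sa \<times> Sb)"
  have TS: "T \<subseteq> SN" unfolding T_def SN_def Sa_def Sb_def using blk_perm(1) by auto
  have "Alt (a + b) (\<lambda>zs. E (take a zs) * A (drop a zs)) ys = sum f SN"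
    unfolding Alt_def f_def SN_def ..
  also have "\<dots> = sum f T"
  proof (rule sum.mono_neutral_right)
    show "finite SN" unfolding SN_def by (rule finite_permutations) simp
    show "T \<subseteq> SN" by (rule TS)
    show "\<forall>\<rho>\<in>SN - T. f \<rho> = 0"
    proof
      fix \<rho> assume r: "\<rho> \<in> SN - T"
      then have rp: "\<rho> permutes {0..<a+b}" by (simp add: SN_def)
      have "\<exists>i. a \<le> i \<and> i < a + b \<and> \<rho> i < a"
      proof (rule ccontr)
        assume "\<not> ?thesis"
        then have "\<rho> \<in> T" unfolding T_def Sa_def Sb_def
          using blk_surj[OF rp] by (meson not_le)
        then show False using r by simp
      qed
      then obtain i where "a \<le> i" "i < a + b" "\<rho> i < a" by blast
      then have "A (drop a (Pm \<rho> ys)) = 0" using van[OF rp] unfolding ys_def by blast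
      then show "f \<rho> = 0" by (simp add: f_def)
    qed
  qed
  also have "\<dots> = sum (f \<circ> blk a) (Sa \<times> Sb)"
    unfolding T_def by (rule sum.reindex) (unfold Sa_def Sb_def, rule blk_inj)
  also have "\<dots> = (\<Sum>p\<in>Sa \<times> Sb. of_int (sign (fst p)) * E (Pm (fst p) us) * A vs)"
  proof (rule sum.cong[OF refl])
    fix p assume "p \<in> Sa \<times> Sb"
    then obtain p1 p2 where pp: "p = (p1, p2)" and p1: "p1 permutes {0..<a}" and p2: "p2 permutes {0..<b}"
      by (auto simp: Sa_def Sb_def)
    have sh: "shiftp a p2 permutes {0..<a+b}"
      by (rule permutes_subset[OF conjunct1[OF shiftp_perm[OF p2, of a]]]) auto
    have "Pm (blk a (p1, p2)) ys = Pm (shiftp a p2) (Pm p1 ys)"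
      unfolding blk_def by (simp, rule Pm_comp) (use sh ly perm_lt in auto)
    moreover have "take a (Pm (shiftp a p2) (Pm p1 ys)) = Pm p1 us"
      using Pm_shift_take[of "Pm p1 ys" a b p2] Pm_take[OF p1, of ys] ly lu by (simp add: ys_def)
    moreover have "drop a (Pm (shiftp a p2) (Pm p1 ys)) = Pm p2 vs"
      using Pm_shift_drop[OF p2, of "Pm p1 ys" a] Pm_drop[OF p1, of ys] ly lu by (simp add: ys_def)
    moreover have "sign (blk a (p1, p2)) = sign p1 * sign p2" by (rule blk_perm(2)[OF p1 p2])
    moreover have "of_int (sign p2) * of_int (sign p2) = (1::real)"
      by (metis of_int_mult sign_idempotent of_int_1)
    ultimately show "(f \<circ> blk a) p = of_int (sign (fst p)) * E (Pm (fst p) us) * A vs"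
      unfolding pp f_def using altA[OF p2]
      by (simp add: mult.assoc mult.left_commute)
  qed
  also have "\<dots> = (\<Sum>p1\<in>Sa. \<Sum>p2\<in>Sb. of_int (sign p1) * E (Pm p1 us) * A vs)"
    by (subst sum.cartesian_product) (simp add: case_prod_beta)
  also have "\<dots> = (\<Sum>p1\<in>Sa. of_nat (card Sb) * (of_int (sign p1) * E (Pm p1 us) * A vs))"
    by simp
  also have "\<dots> = fact b * A vs * Alt a E us"
    unfolding Alt_def Sa_def Sb_def sum_distrib_left
    by (intro sum.cong refl) (simp add: card_permutations)
  finally show ?thesis unfolding ys_def .
qed

definition swp :: "nat \<Rightarrow> nat \<Rightarrow> nat \<Rightarrow> nat" where
  "swp n q i = (if i < q then n + i else if i < n + q then i - q else i)"

lemma swp_perm: "swp n q permutes {0..<n+q}"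
proof (rule permutes_natI)
  show "\<And>x. x < n + q \<Longrightarrow> swp n q x < n + q" by (auto simp: swp_def)
  show "inj_on (swp n q) {0..<n+q}"
    by (rule inj_onI) (auto simp: swp_def split: if_splits)
  show "\<And>x. n + q \<le> x \<Longrightarrow> swp n q x = x" by (simp add: swp_def)
qed

lemma Pm_swp: "length zs = n + q \<Longrightarrow> Pm (swp n q) zs = drop n zs @ take n zs"
  by (intro nth_equalityI) (auto simp: swp_def nth_append)

lemma wedge_swap:
  "wedge n q A B xs = of_int (sign (swp n q)) * wedge q n B A xs"
proof (cases "length xs = n + q")
  case False
  then show ?thesis by (simp add: wedge_def add.commute)
next
  case True
  define F1 where "F1 zs = A (take n zs) * B (drop n zs)" for zs
  define F2 where "F2 zs = B (take q zs) * A (drop q zs)" for zs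
  have "Alt (n + q) F1 xs = Alt (n + q) (\<lambda>zs. F2 (Pm (swp n q) zs)) xs"
    unfolding Alt_def
  proof (intro sum.cong refl)
    fix \<rho> assume "\<rho> \<in> {\<rho>. \<rho> permutes {0..<n + q}}"
    have l: "length (Pm \<rho> xs) = n + q" using True by simp
    show "of_int (sign \<rho>) * F1 (Pm \<rho> xs) = of_int (sign \<rho>) * F2 (Pm (swp n q) (Pm \<rho> xs))"
      unfolding Pm_swp[OF l] F1_def F2_def using l by (simp add: mult.commute)
  qed
  also have "\<dots> = of_int (sign (swp n q)) * Alt (n + q) F2 xs"
    by (rule Alt_compose_right[OF swp_perm True])
  finally have e: "Alt (n + q) F1 xs = of_int (sign (swp n q)) * Alt (n + q) F2 xs" .
  have w1: "wedge n q A B xs = 1 / (fact n * fact q) * Alt (n + q) F1 xs"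
    unfolding F1_def by (rule wedge_Alt[OF True])
  have w2: "wedge q n B A xs = 1 / (fact q * fact n) * Alt (q + n) F2 xs"
    unfolding F2_def by (rule wedge_Alt) (use True in simp)
  show ?thesis unfolding w1 w2 e by (simp add: add.commute mult.commute)
qed

lemma wedge_scale2: "wedge k l a (\<lambda>xs. c * b xs) ys = c * wedge k l a b ys"
  unfolding wedge_def by (simp add: sum_distrib_left mult.assoc mult.left_commute)

lemma sign_nz: "sign p \<noteq> 0"
  by (simp add: sign_def)

lemma part2:
  fixes \<theta>0 :: "'w::real_vector list \<Rightarrow> real" and \<zeta>0 :: "'d::real_vector list \<Rightarrow> real"
    and \<xi> :: "'w \<times> 'd \<Rightarrow> real"
  assumes vol: "volume_form n \<theta>0"
    and W: "wedge 1 (n + q) (one_form \<xi>) (wedge n q (\<lambda>xs. \<theta>0 (map fst xs)) (\<lambda>xs. \<zeta>0 (map snd xs))) = (\<lambda>_. 0)"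
  shows "wedge 1 q (one_form (\<lambda>d. \<xi> (0, d))) \<zeta>0 = (\<lambda>_. 0)"
proof (rule ext)
  fix ds :: "'d list"
  define A where "A xs = \<theta>0 (map fst xs)" for xs :: "('w \<times> 'd) list"
  define B where "B xs = \<zeta>0 (map snd xs)" for xs :: "('w \<times> 'd) list"
  have alt: "alt_form n \<theta>0" using vol unfolding volume_form_def by blast
  show "wedge 1 q (one_form (\<lambda>d. \<xi> (0, d))) \<zeta>0 ds = 0"
  proof (cases "length ds = Suc q")
    case False
    then show ?thesis by (simp add: wedge_def)
  next
    case lds: True
    obtain ws where ws: "\<theta>0 ws \<noteq> 0" using vol by (auto simp: volume_form_def)
    have lws: "length ws = n" using ws alt by (auto simp: alt_form_def)
    define us where "us = map (\<lambda>d. (0::'w, d)) ds"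
    define vs where "vs = map (\<lambda>w. (w, 0::'d)) ws"
    define ys where "ys = us @ vs"
    have lus: "length us = Suc q" using lds by (simp add: us_def)
    have lvs: "length vs = n" using lws by (simp add: vs_def)
    have lys: "length ys = Suc (q + n)" using lus lvs by (simp add: ys_def)
    define s :: real where "s = of_int (sign (swp n q))"
    have snz: "s \<noteq> 0" unfolding s_def using sign_nz by simp
    have mu: "wedge n q A B = (\<lambda>xs. s * wedge q n B A xs)"
      unfolding s_def by (rule ext) (rule wedge_swap)
    have "s * wedge 1 (q + n) (one_form \<xi>) (wedge q n B A) ys = 0"
      using fun_cong[OF W, of ys] unfolding A_def[symmetric] B_def[symmetric] mu wedge_scale2
      by (simp add: add.commute)
    then have "wedge 1 (q + n) (one_form \<xi>) (wedge q n B A) ys = 0" using snz by simp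
    then have z: "Alt (Suc (q + n)) (\<lambda>zs. \<xi> (hd zs) * (B (take q (tl zs)) * A (drop q (tl zs)))) ys = 0"
      unfolding W1[OF lys] by simp
    define E' where "E' us = \<xi> (hd us) * B (tl us)" for us :: "('w \<times> 'd) list"
    have Heq: "(\<lambda>zs. \<xi> (hd zs) * (B (take q (tl zs)) * A (drop q (tl zs))))
        = (\<lambda>zs. E' (take (Suc q) zs) * A (drop (Suc q) zs))"
    proof (rule ext)
      fix zs :: "('w \<times> 'd) list"
      show "\<xi> (hd zs) * (B (take q (tl zs)) * A (drop q (tl zs))) = E' (take (Suc q) zs) * A (drop (Suc q) zs)"
        unfolding E'_def by (cases zs) (simp_all add: take_tl drop_Suc)
    qed
    have van: "A (drop (Suc q) (Pm \<rho> (us @ vs))) = 0"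
      if r: "\<rho> permutes {0..<Suc q + n}" and i: "Suc q \<le> i" "i < Suc q + n" "\<rho> i < Suc q" for \<rho> i
    proof -
      have l: "length (map fst (drop (Suc q) (Pm \<rho> (us @ vs)))) = n" using lus lvs by simp
      have "map fst (drop (Suc q) (Pm \<rho> (us @ vs))) ! (i - Suc q) = fst ((us @ vs) ! \<rho> i)"
        using i lus lvs by simp
      also have "\<dots> = 0" using i lus by (simp add: nth_append us_def)
      finally have z: "map fst (drop (Suc q) (Pm \<rho> (us @ vs))) ! (i - Suc q) = 0" .
      have "i - Suc q < n" using i by simp
      then show ?thesis unfolding A_def using alt_zero[OF alt l _ z] by simp
    qed
    have altA: "A (Pm \<pi> vs) = of_int (sign \<pi>) * A vs" if p: "\<pi> permutes {0..<n}" for \<pi>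
    proof -
      have "map fst (Pm \<pi> vs) = Pm \<pi> (map fst vs)"
        by (rule Pm_map[symmetric]) (use p lvs perm_lt in auto)
      moreover have "map fst vs = ws" by (simp add: vs_def comp_def)
      ultimately show ?thesis unfolding A_def using alt_perm[OF alt p lws] by simp
    qed
    have "Alt (Suc q + n) (\<lambda>zs. E' (take (Suc q) zs) * A (drop (Suc q) zs)) (us @ vs)
        = fact n * A vs * Alt (Suc q) E' us"
      by (rule Alt_block_eval[OF lus lvs van altA])
    moreover have "A vs = \<theta>0 ws" by (simp add: A_def vs_def comp_def)
    ultimately have "Alt (Suc q) E' us = 0" using z ws unfolding Heq ys_def by simp
    moreover have "Alt (Suc q) E' us = Alt (Suc q) (\<lambda>es. \<xi> (0, hd es) * \<zeta>0 (tl es)) ds"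
      unfolding Alt_def
    proof (intro sum.cong refl)
      fix \<pi> assume "\<pi> \<in> {\<pi>. \<pi> permutes {0..<Suc q}}"
      then have p: "\<pi> permutes {0..<Suc q}" by simp
      have pm: "Pm \<pi> us = map (\<lambda>d. (0::'w, d)) (Pm \<pi> ds)"
        unfolding us_def by (rule Pm_map) (use p lds perm_lt in auto)
      have ne: "Pm \<pi> ds \<noteq> []" using lds by (metis length_Pm Zero_not_Suc list.size(3))
      show "of_int (sign \<pi>) * E' (Pm \<pi> us) = of_int (sign \<pi>) * (\<xi> (0, hd (Pm \<pi> ds)) * \<zeta>0 (tl (Pm \<pi> ds)))"
        unfolding pm E'_def B_def using ne by (simp add: hd_map map_tl comp_def)
    qed
    ultimately have e0: "Alt (Suc q) (\<lambda>es. \<xi> (0, hd es) * \<zeta>0 (tl es)) ds = 0" by simp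
    have "Alt (Suc q) (\<lambda>zs. one_form (\<lambda>d. \<xi> (0, d)) (take 1 zs) * \<zeta>0 (drop 1 zs)) ds
        = Alt (Suc q) (\<lambda>es. \<xi> (0, hd es) * \<zeta>0 (tl es)) ds"
      unfolding Alt_def
    proof (intro sum.cong refl)
      fix \<pi> assume "\<pi> \<in> {\<pi>. \<pi> permutes {0..<Suc q}}"
      have ne: "Pm \<pi> ds \<noteq> []" using lds by (metis length_Pm Zero_not_Suc list.size(3))
      then show "of_int (sign \<pi>) * (one_form (\<lambda>d. \<xi> (0, d)) (take 1 (Pm \<pi> ds)) * \<zeta>0 (drop 1 (Pm \<pi> ds)))
          = of_int (sign \<pi>) * (\<xi> (0, hd (Pm \<pi> ds)) * \<zeta>0 (tl (Pm \<pi> ds)))"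
        by (cases "Pm \<pi> ds") (auto simp: one_form_def)
    qed
    then show ?thesis using wedge_Alt[of ds 1 q] lds e0 by simp
  qed
qed

lemma exists_functional:
  fixes w :: "'w::real_vector"
  assumes "w \<noteq> 0"
  obtains \<alpha> :: "'w \<Rightarrow> real" where "linear \<alpha>" "\<alpha> w = 1"
proof -
  have "\<not> dependent {w}" using assms by (simp add: real_vector.dependent_def)
  then obtain g :: "'w \<Rightarrow> real" where "linear g" "\<forall>x\<in>{w}. g x = 1"
    using real_vector.linear_independent_extend[of "{w}" "\<lambda>_. 1"] by blast
  then show ?thesis using that by auto
qed

theorem lemma3p6:
  fixes \<theta>0 :: "'w::real_vector list \<Rightarrow> real"
    and \<zeta>0 :: "'d::real_vector list \<Rightarrow> real"
    and n q :: nat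
  assumes "fin_dim_space TYPE('w)"
    and "fin_dim_space TYPE('d)"
    and "volume_form n \<theta>0"
    and "indivisible q \<zeta>0"
  shows "div_space (n + q)
           (wedge n q (\<lambda>xs. \<theta>0 (map fst xs)) (\<lambda>xs. \<zeta>0 (map snd xs)))
         = ({0} \<times> UNIV :: ('w \<times> 'd) set)"
proof (intro set_eqI iffI)
  fix v :: "'w \<times> 'd"
  assume v: "v \<in> div_space (n + q) (wedge n q (\<lambda>xs. \<theta>0 (map fst xs)) (\<lambda>xs. \<zeta>0 (map snd xs)))"
  show "v \<in> {0} \<times> UNIV"
  proof (rule ccontr)
    assume "v \<notin> {0} \<times> UNIV"
    then have "fst v \<noteq> 0" by (cases v) auto
    then obtain \<alpha> :: "'w \<Rightarrow> real" where a: "linear \<alpha>" "\<alpha> (fst v) = 1" by (rule exists_functional)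
    have lx: "linear (\<lambda>p::'w \<times> 'd. \<alpha> (fst p))"
      using a(1) unfolding linear_iff by simp
    have "wedge 1 (n + q) (one_form (\<lambda>p::'w\<times>'d. \<alpha> (fst p)))
           (wedge n q (\<lambda>xs. \<theta>0 (map fst xs)) (\<lambda>xs. \<zeta>0 (map snd xs))) = (\<lambda>_. 0)"
      by (rule part1[OF assms(1) assms(3) a(1)])
    then have "\<alpha> (fst v) = 0" using v lx unfolding div_space_def by blast
    then show False using a(2) by simp
  qed
next
  fix v :: "'w \<times> 'd"
  assume "v \<in> {0} \<times> UNIV"
  then obtain d where vd: "v = (0, d)" by auto
  show "v \<in> div_space (n + q) (wedge n q (\<lambda>xs. \<theta>0 (map fst xs)) (\<lambda>xs. \<zeta>0 (map snd xs)))"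
    unfolding div_space_def
  proof (intro CollectI allI impI)
    fix \<xi> :: "'w \<times> 'd \<Rightarrow> real"
    assume h: "linear \<xi> \<and> wedge 1 (n + q) (one_form \<xi>) (wedge n q (\<lambda>xs. \<theta>0 (map fst xs)) (\<lambda>xs. \<zeta>0 (map snd xs))) = (\<lambda>_. 0)"
    have lb: "linear (\<lambda>d. \<xi> (0, d))"
    proof (rule linearI)
      fix x y :: 'd and r :: real
      show "\<xi> (0, x + y) = \<xi> (0, x) + \<xi> (0, y)"
        using linear_add[of \<xi> "(0, x)" "(0, y)"] h by simp
      show "\<xi> (0, r *\<^sub>R x) = r *\<^sub>R \<xi> (0, x)"
        using linear_scale[of \<xi> r "(0, x)"] h by simp
    qed
    have w: "wedge 1 q (one_form (\<lambda>d. \<xi> (0, d))) \<zeta>0 = (\<lambda>_. 0)"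
      by (rule part2[OF assms(3)]) (use h in blast)
    have "d \<in> div_space q \<zeta>0" using assms(4) by (simp add: indivisible_def)
    then have "\<xi> (0, d) = 0" using lb w unfolding div_space_def by blast
    then show "\<xi> v = 0" using vd by simp
  qed
qed

end
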